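(* Let $\varrho=\rho_1\otimes\cdots\otimes\rho_n$ be a product state on $\mathcal K=\bigotimes_{i=1}^n\mathcal H_i$ (finite-dimensional Hilbert spaces). For $1\le i\ne j\le n$ let $X_{ij}=X_{ji}$ be an observable on $\mathcal K$ acting nontrivially only on the $i$th and $j$th tensor components. Define $X_i=\sum_{j\ne i}X_{ij}$ and $X=\sum_{i\ne j}X_{ij}=\sum_iX_i$. Then $$\mathrm{Var}_\varrho[X]\le4\sum_{i=1}^n\mathbb E_\varrho[(\mathcal D_iX_i)^2]=4\sum_{i=1}^n\mathbb E_\varrho[X_i^2]-4\sum_{i=1}^n\mathbb E_{\varrho\otimes\varrho}\big[(X_i\otimes I)F_i(X_i\otimes I)F_i\big].$$
   Context: $\mathbb E_\tau[Y]=\mathrm{Tr}[\tau Y]$, $\mathrm{Var}_\varrho[X]=\mathbb E_\varrho[X^2]-\mathbb E_\varrho[X]^2$. For $i\in[n]$, $\mathcal E_iY=\mathrm{Tr}_i[(\rho_i\otimes I)Y]$, regarded as an operator on $\mathcal K$ by tensoring with the identity on $\mathcal H_i$, and $\mathcal D_iY=Y-\mathcal E_iY$. $F_i$ is the swap operator on $\mathcal K\otimes\mathcal K$ exchanging the $i$th tensor component of the first copy with the $i$th tensor component of the second copy. "Acting nontrivially only on components $i,j$" means the operator has the form $Y\otimes I$ with $Y$ acting on $\mathcal H_i\otimes\mathcal H_j$ and $I$ the identity on the remaining factors. *)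

theory Defs
  imports Complex_Main "HOL-Library.Complex_Order" "HOL-Library.FuncSet"
begin

(* Basis of K = H_0 (x) ... (x) H_(n-1), dim H_i = d i: tuples x with x i < d i for i < n. *)
type_synonym idx = "nat \<Rightarrow> nat"
(* Operators on K, as matrices indexed by basis tuples (only entries on the basis matter). *)
type_synonym op = "idx \<Rightarrow> idx \<Rightarrow> complex"
(* Operators on K (x) K, indexed by pairs of basis tuples. *)
type_synonym op2 = "idx \<times> idx \<Rightarrow> idx \<times> idx \<Rightarrow> complex"

definition basis :: "nat \<Rightarrow> (nat \<Rightarrow> nat) \<Rightarrow> idx set" where
  "basis n d = PiE {..<n} (\<lambda>i. {..<d i})"

definition mmul :: "nat \<Rightarrow> (nat \<Rightarrow> nat) \<Rightarrow> op \<Rightarrow> op \<Rightarrow> op" where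
  "mmul n d A C = (\<lambda>x y. \<Sum>z\<in>basis n d. A x z * C z y)"

definition tr :: "nat \<Rightarrow> (nat \<Rightarrow> nat) \<Rightarrow> op \<Rightarrow> complex" where
  "tr n d A = (\<Sum>x\<in>basis n d. A x x)"

definition expect :: "nat \<Rightarrow> (nat \<Rightarrow> nat) \<Rightarrow> op \<Rightarrow> op \<Rightarrow> complex" where
  "expect n d \<tau> Y = tr n d (mmul n d \<tau> Y)"

definition var :: "nat \<Rightarrow> (nat \<Rightarrow> nat) \<Rightarrow> op \<Rightarrow> op \<Rightarrow> complex" where
  "var n d \<tau> X = expect n d \<tau> (mmul n d X X) - (expect n d \<tau> X)^2"

definition density_matrix :: "nat \<Rightarrow> (nat \<Rightarrow> nat \<Rightarrow> complex) \<Rightarrow> bool" where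
  "density_matrix m r \<longleftrightarrow>
     (\<forall>a<m. \<forall>b<m. r a b = cnj (r b a)) \<and>
     (\<forall>v :: nat \<Rightarrow> complex. (\<Sum>a<m. \<Sum>b<m. cnj (v a) * r a b * v b) \<ge> 0) \<and>
     (\<Sum>a<m. r a a) = 1"

definition product_state :: "nat \<Rightarrow> (nat \<Rightarrow> nat \<Rightarrow> nat \<Rightarrow> complex) \<Rightarrow> op" where
  "product_state n \<rho> = (\<lambda>x y. \<Prod>i<n. \<rho> i (x i) (y i))"

definition hermitian :: "nat \<Rightarrow> (nat \<Rightarrow> nat) \<Rightarrow> op \<Rightarrow> bool" where
  "hermitian n d X \<longleftrightarrow> (\<forall>x\<in>basis n d. \<forall>y\<in>basis n d. X x y = cnj (X y x))"

(* X = Y (x) I with Y acting on H_i (x) H_j *)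
definition local_on :: "nat \<Rightarrow> (nat \<Rightarrow> nat) \<Rightarrow> nat \<Rightarrow> nat \<Rightarrow> op \<Rightarrow> bool" where
  "local_on n d i j X \<longleftrightarrow>
     (\<exists>Y :: nat \<Rightarrow> nat \<Rightarrow> nat \<Rightarrow> nat \<Rightarrow> complex.
        \<forall>x\<in>basis n d. \<forall>y\<in>basis n d.
          X x y = (if (\<forall>k\<in>{..<n} - {i, j}. x k = y k) then Y (x i) (x j) (y i) (y j) else 0))"

(* E_i Y = Tr_i[(rho_i (x) I) Y], tensored with the identity on H_i *)
definition cond_exp :: "(nat \<Rightarrow> nat) \<Rightarrow> (nat \<Rightarrow> nat \<Rightarrow> nat \<Rightarrow> complex) \<Rightarrow> nat \<Rightarrow> op \<Rightarrow> op" where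
  "cond_exp d \<rho> i Y = (\<lambda>x y. if x i = y i
      then (\<Sum>a<d i. \<Sum>b<d i. \<rho> i a b * Y (x(i := b)) (y(i := a))) else 0)"

definition cond_dev :: "(nat \<Rightarrow> nat) \<Rightarrow> (nat \<Rightarrow> nat \<Rightarrow> nat \<Rightarrow> complex) \<Rightarrow> nat \<Rightarrow> op \<Rightarrow> op" where
  "cond_dev d \<rho> i Y = (\<lambda>x y. Y x y - cond_exp d \<rho> i Y x y)"

definition mmul2 :: "nat \<Rightarrow> (nat \<Rightarrow> nat) \<Rightarrow> op2 \<Rightarrow> op2 \<Rightarrow> op2" where
  "mmul2 n d A C = (\<lambda>x y. \<Sum>z\<in>basis n d \<times> basis n d. A x z * C z y)"

definition tr2 :: "nat \<Rightarrow> (nat \<Rightarrow> nat) \<Rightarrow> op2 \<Rightarrow> complex" where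
  "tr2 n d A = (\<Sum>x\<in>basis n d \<times> basis n d. A x x)"

definition expect2 :: "nat \<Rightarrow> (nat \<Rightarrow> nat) \<Rightarrow> op2 \<Rightarrow> op2 \<Rightarrow> complex" where
  "expect2 n d \<tau> Y = tr2 n d (mmul2 n d \<tau> Y)"

definition tensor :: "op \<Rightarrow> op \<Rightarrow> op2" where
  "tensor \<tau> \<sigma> = (\<lambda>(x, x') (y, y'). \<tau> x y * \<sigma> x' y')"

definition ext_id :: "op \<Rightarrow> op2" where
  "ext_id A = (\<lambda>(x, x') (y, y'). A x y * (if x' = y' then 1 else 0))"

(* F_i : swap of the i-th tensor components of the two copies *)
definition swap_op :: "nat \<Rightarrow> op2" where
  "swap_op i = (\<lambda>(x, x') (y, y'). if y = x(i := x' i) \<and> y' = x'(i := x i) then 1 else 0)"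

end

theory Submission
  imports Defs
begin

lemma qform_two:
  fixes r :: "nat \<Rightarrow> nat \<Rightarrow> complex"
  assumes "a0 < m"
  shows "(\<Sum>a<Suc m. \<Sum>b<Suc m. cnj ((\<lambda>j. (if j = m then 1 else 0) + (if j = a0 then s else 0)) a) * r a b *
            (\<lambda>j. (if j = m then 1 else 0) + (if j = a0 then s else 0)) b)
   = r m m + cnj s * r a0 m + s * r m a0 + cnj s * s * r a0 a0"
  using assms by (simp add: sum.distrib distrib_left distrib_right if_distrib[where f=cnj] sum.delta sum.delta' if_distrib[where f="\<lambda>x. x * _"] if_distrib[where f="\<lambda>x. _ * x"] cong: if_cong)

lemma qform_one:
  fixes r :: "nat \<Rightarrow> nat \<Rightarrow> complex"
  assumes "a0 < m"
  shows "(\<Sum>a<m. \<Sum>b<m. cnj ((\<lambda>j. if j = a0 then 1 else 0) a) * r a b * (\<lambda>j. if j = a0 then 1 else 0) b) = r a0 a0"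
  using assms by (simp add: if_distrib[where f=cnj] sum.delta sum.delta' if_distrib[where f="\<lambda>x. x * _"] if_distrib[where f="\<lambda>x. _ * x"] cong: if_cong)

lemma cnj_mult_self: "cnj s * s = complex_of_real ((cmod s)^2)"
  by (metis complex_norm_square mult.commute of_real_power)

lemma psd_zero_col:
  fixes r :: "nat \<Rightarrow> nat \<Rightarrow> complex"
  assumes herm: "\<forall>a<Suc m. \<forall>b<Suc m. r a b = cnj (r b a)"
    and psd: "\<forall>v. 0 \<le> (\<Sum>a<Suc m. \<Sum>b<Suc m. cnj (v a) * r a b * v b)"
    and p0: "r m m = 0" and a0: "a0 < m"
  shows "r a0 m = 0"
proof -
  have raa: "0 \<le> r a0 a0"
    using psd[rule_format, of "\<lambda>j. if j = a0 then 1 else 0"] 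
    by (simp only: qform_one[of a0 "Suc m" r, OF less_SucI[OF a0]])
  define q where "q = Re (r a0 a0)"
  have q0: "q \<ge> 0" and rq: "r a0 a0 = complex_of_real q"
    using raa unfolding q_def by (auto simp: less_eq_complex_def complex_eq_iff)
  define c where "c = r a0 m"
  define t :: real where "t = 1 / (q + 1)"
  have t0: "t > 0" using q0 by (simp add: t_def)
  have tq: "t * q < 1" using q0 by (simp add: t_def field_simps)
  define s where "s = - complex_of_real t * c"
  have rma: "r m a0 = cnj c" using herm[rule_format, of m a0] a0 by (simp add: c_def)
  have "0 \<le> r m m + cnj s * r a0 m + s * r m a0 + cnj s * s * r a0 a0"
    using psd[rule_format, of "\<lambda>j. (if j = m then 1 else 0) + (if j = a0 then s else 0)"] 
    by (simp only: qform_two[OF a0])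
  also have "\<dots> = cnj c * c * complex_of_real (t * t * q - 2 * t)"
    unfolding p0 rma rq s_def c_def[symmetric]
    by (simp add: algebra_simps)
  also have "\<dots> = complex_of_real ((cmod c)^2 * (t * t * q - 2 * t))"
    by (simp only: cnj_mult_self of_real_mult)
  finally have "0 \<le> (cmod c)^2 * (t * t * q - 2 * t)" by (simp add: less_eq_complex_def)
  moreover have "t * t * q - 2 * t < 0"
  proof -
    have "t * (t * q) < t * 2" using tq t0 by simp
    thus ?thesis by (simp add: algebra_simps)
  qed
  ultimately have "(cmod c)^2 \<le> 0" by (auto simp add: zero_le_mult_iff)
  thus ?thesis by (simp add: c_def)
qed

lemma qform_split:
  fixes r :: "nat \<Rightarrow> nat \<Rightarrow> complex"
  shows "(\<Sum>a<Suc m. \<Sum>b<Suc m. cnj (v a) * r a b * v b) =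
    (\<Sum>a<m. \<Sum>b<m. cnj (v a) * r a b * v b) + (\<Sum>a<m. cnj (v a) * r a m) * v m
     + cnj (v m) * (\<Sum>b<m. r m b * v b) + cnj (v m) * r m m * v m"
  by (simp add: sum.distrib sum_distrib_left sum_distrib_right mult.assoc)

lemma psd_decomp:
  fixes r :: "nat \<Rightarrow> nat \<Rightarrow> complex"
  assumes "\<forall>a<m. \<forall>b<m. r a b = cnj (r b a)"
    and "\<forall>v. 0 \<le> (\<Sum>a<m. \<Sum>b<m. cnj (v a) * r a b * v b)"
  shows "\<exists>w. \<forall>a<m. \<forall>b<m. r a b = (\<Sum>k<m. w k a * cnj (w k b))"
  using assms
proof (induction m arbitrary: r)
  case 0
  then show ?case by simp
next
  case (Suc m)
  note herm = Suc.prems(1) and psd = Suc.prems(2)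
  have psdm: "0 \<le> r m m"
    using psd[rule_format, of "\<lambda>j. if j = m then 1 else 0"]
    by (simp only: qform_one[of m "Suc m" r, OF lessI])
  define p where "p = Re (r m m)"
  have p0: "p \<ge> 0" and rp: "r m m = complex_of_real p"
    using psdm unfolding p_def by (auto simp: less_eq_complex_def complex_eq_iff)
  have hm: "\<forall>a<m. \<forall>b<m. r a b = cnj (r b a)"
  proof (intro allI impI)
    fix a b assume "a < m" "b < m"
    then show "r a b = cnj (r b a)" using herm[rule_format, of a b] by simp
  qed
  show ?case
  proof (cases "p = 0")
    case True
    have col: "r a m = 0" if "a < m" for a
      using psd_zero_col[OF herm psd _ that] rp True by simp
    have row: "r m a = 0" if "a < m" for a
      using herm[rule_format, of m a] col[OF that] that by simp
    have pm: "\<forall>v. 0 \<le> (\<Sum>a<m. \<Sum>b<m. cnj (v a) * r a b * v b)"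
    proof
      fix v :: "nat \<Rightarrow> complex"
      have "0 \<le> (\<Sum>a<Suc m. \<Sum>b<Suc m. cnj ((\<lambda>j. if j = m then 0 else v j) a) * r a b * (\<lambda>j. if j = m then 0 else v j) b)"
        by (rule psd[rule_format])
      also have "\<dots> = (\<Sum>a<m. \<Sum>b<m. cnj (v a) * r a b * v b)"
        by (simp only: qform_split) simp
      finally show "0 \<le> (\<Sum>a<m. \<Sum>b<m. cnj (v a) * r a b * v b)" .
    qed
    obtain w' where w': "\<forall>a<m. \<forall>b<m. r a b = (\<Sum>k<m. w' k a * cnj (w' k b))"
      using Suc.IH[OF hm pm] by blast
    define w where "w = (\<lambda>k a. if k < m \<and> a < m then w' k a else 0)"
    show ?thesis
    proof (intro exI allI impI)
      fix a b assume a: "a < Suc m" and b: "b < Suc m"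
      show "r a b = (\<Sum>k<Suc m. w k a * cnj (w k b))"
      proof (cases "a < m \<and> b < m")
        case True
        then show ?thesis using w' by (simp add: w_def)
      next
        case False
        then have "a = m \<or> b = m" using a b by auto
        then have "r a b = 0" using col row rp True a b by (auto simp: less_Suc_eq)
        then show ?thesis using False by (auto simp add: w_def)
      qed
    qed
  next
    case False
    then have pp: "p > 0" using p0 by simp
    define r' where "r' = (\<lambda>a b. r a b - r a m * r m b / complex_of_real p)"
    have herm': "\<forall>a<m. \<forall>b<m. r' a b = cnj (r' b a)"
    proof (intro allI impI)
      fix a b assume a: "a < m" and b: "b < m"
      have 1: "r a b = cnj (r b a)" using herm[rule_format, of a b] a b by simp
      have 2: "r m b = cnj (r b m)" using herm[rule_format, of m b] b by simp
      have 3: "r a m = cnj (r m a)" using herm[rule_format, of a m] a by simp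
      show "r' a b = cnj (r' b a)" unfolding r'_def
        by (simp add: 1 2 3 mult.commute)
    qed
    have psd': "\<forall>v. 0 \<le> (\<Sum>a<m. \<Sum>b<m. cnj (v a) * r' a b * v b)"
    proof
      fix v :: "nat \<Rightarrow> complex"
      define c where "c = (\<Sum>b<m. r m b * v b)"
      have cc: "(\<Sum>a<m. cnj (v a) * r a m) = cnj c"
      proof -
        have "cnj c = (\<Sum>a<m. cnj (r m a) * cnj (v a))" by (simp add: c_def)
        also have "\<dots> = (\<Sum>a<m. cnj (v a) * r a m)"
        proof (rule sum.cong[OF refl])
          fix x assume "x \<in> {..<m}"
          then have "r x m = cnj (r m x)" using herm[rule_format, of x m] by simp
          then show "cnj (r m x) * cnj (v x) = cnj (v x) * r x m" by simp
        qed
        finally show ?thesis by simp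
      qed
      define v' where "v' = (\<lambda>j. if j = m then - c / complex_of_real p else v j)"
      have "0 \<le> (\<Sum>a<Suc m. \<Sum>b<Suc m. cnj (v' a) * r a b * v' b)"
        by (rule psd[rule_format])
      also have "\<dots> = (\<Sum>a<m. \<Sum>b<m. cnj (v a) * r a b * v b) + cnj c * (- c / complex_of_real p)
          + cnj (- c / complex_of_real p) * c + cnj (- c / complex_of_real p) * complex_of_real p * (- c / complex_of_real p)"
        unfolding qform_split by (simp add: v'_def cc c_def[symmetric] rp)
      also have "\<dots> = (\<Sum>a<m. \<Sum>b<m. cnj (v a) * r a b * v b) - cnj c * c / complex_of_real p"
        using pp by (simp add: field_simps)
      also have "\<dots> = (\<Sum>a<m. \<Sum>b<m. cnj (v a) * r' a b * v b)"
      proof -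
        have "(\<Sum>a<m. \<Sum>b<m. cnj (v a) * r' a b * v b) = (\<Sum>a<m. \<Sum>b<m. cnj (v a) * r a b * v b)
            - (\<Sum>a<m. \<Sum>b<m. (cnj (v a) * r a m) * (r m b * v b)) / complex_of_real p"
          unfolding r'_def by (simp add: sum_subtractf sum_divide_distrib algebra_simps)
        also have "(\<Sum>a<m. \<Sum>b<m. (cnj (v a) * r a m) * (r m b * v b)) = cnj c * c"
          by (simp add: sum_product[symmetric] cc c_def[symmetric])
        finally show ?thesis by simp
      qed
      finally show "0 \<le> (\<Sum>a<m. \<Sum>b<m. cnj (v a) * r' a b * v b)" .
    qed
    obtain w' where w': "\<forall>a<m. \<forall>b<m. r' a b = (\<Sum>k<m. w' k a * cnj (w' k b))"
      using Suc.IH[OF herm' psd'] by blast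
    define sp where "sp = complex_of_real (sqrt p)"
    have sp2: "sp * cnj sp = complex_of_real p" using p0 by (simp add: sp_def of_real_mult[symmetric])
    have spnz: "sp \<noteq> 0" using pp by (simp add: sp_def)
    define w where "w = (\<lambda>k a. if k = m then r a m / sp else if k < m \<and> a < m then w' k a else 0)"
    show ?thesis
    proof (intro exI allI impI)
      fix a b assume a: "a < Suc m" and b: "b < Suc m"
      have last: "w m a * cnj (w m b) = r a m * cnj (r b m) / complex_of_real p"
        unfolding w_def sp2[symmetric] using spnz by (simp add: field_simps)
      have "(\<Sum>k<Suc m. w k a * cnj (w k b)) = (\<Sum>k<m. w k a * cnj (w k b)) + r a m * cnj (r b m) / complex_of_real p"
        by (simp add: last)
      also have "(\<Sum>k<m. w k a * cnj (w k b)) = (if a < m \<and> b < m then r' a b else 0)"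
        using w' by (auto simp: w_def)
      finally have eq: "(\<Sum>k<Suc m. w k a * cnj (w k b)) = (if a < m \<and> b < m then r' a b else 0) + r a m * cnj (r b m) / complex_of_real p" .
      have hb: "cnj (r b m) = r m b" using herm[rule_format, of m b] b by simp
      show "r a b = (\<Sum>k<Suc m. w k a * cnj (w k b))"
      proof (cases "a < m \<and> b < m")
        case True
        then show ?thesis unfolding eq hb by (simp add: r'_def)
      next
        case False
        then have "a = m \<or> b = m" using a b by auto
        then show ?thesis
        proof
          assume "a = m"
          then show ?thesis unfolding eq hb using pp by (simp add: rp)
        next
          assume "b = m"
          then show ?thesis unfolding eq hb using pp False by (simp add: rp)
        qed
      qed
    qed
  qed
qed

lemma if0_mult: "(if P then a else 0) * b = (if P then a * b else (0::'a::mult_zero))"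
  by simp
lemma mult_if0: "b * (if P then a else 0) = (if P then b * a else (0::'a::mult_zero))"
  by simp

locale PS =
  fixes n :: nat and d :: "nat \<Rightarrow> nat" and \<rho> :: "nat \<Rightarrow> nat \<Rightarrow> nat \<Rightarrow> complex"
  assumes dims: "\<forall>i<n. d i \<ge> 1"
    and states: "\<forall>i<n. density_matrix (d i) (\<rho> i)"
begin

abbreviation "S \<equiv> basis n d"
abbreviation "R \<equiv> product_state n \<rho>"
abbreviation "E \<equiv> cond_exp d \<rho>"
abbreviation "ex \<equiv> expect n d R"

definition S0 where "S0 i = {x \<in> S. x i = 0}"
definition Rm where "Rm i x y = (\<Prod>k\<in>{..<n}-{i}. \<rho> k (x k) (y k))"
definition al where "al i A x y = (\<Sum>a<d i. \<Sum>b<d i. \<rho> i a b * A (x(i:=b)) (y(i:=a)))"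

lemma mem_S: "x \<in> S \<longleftrightarrow> (\<forall>i<n. x i < d i) \<and> (\<forall>i. n \<le> i \<longrightarrow> x i = undefined)"
  by (auto simp: basis_def PiE_iff extensional_def)

lemma fin_S[simp]: "finite S"
  by (simp add: basis_def finite_PiE)

lemma fin_S0[simp]: "finite (S0 i)"
  by (simp add: S0_def)

lemma upd_S: "x \<in> S \<Longrightarrow> i < n \<Longrightarrow> a < d i \<Longrightarrow> x(i:=a) \<in> S"
  by (auto simp: mem_S)

lemma S_lt: "x \<in> S \<Longrightarrow> i < n \<Longrightarrow> x i < d i"
  by (auto simp: mem_S)

lemma S_eq: "x \<in> S \<Longrightarrow> y \<in> S \<Longrightarrow> (\<forall>i<n. x i = y i) \<Longrightarrow> x = y"
proof (rule ext)
  fix j assume "x \<in> S" "y \<in> S" "\<forall>i<n. x i = y i"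
  then show "x j = y j" unfolding mem_S by (cases "j < n") auto
qed

lemma d_pos: "i < n \<Longrightarrow> 0 < d i"
  using dims by auto

lemma trace1: "i < n \<Longrightarrow> (\<Sum>a<d i. \<rho> i a a) = 1"
  using states unfolding density_matrix_def by blast

lemma herm_rho: "i < n \<Longrightarrow> a < d i \<Longrightarrow> b < d i \<Longrightarrow> \<rho> i a b = cnj (\<rho> i b a)"
  using states unfolding density_matrix_def by blast

lemma sum_split:
  assumes i: "i < n"
  shows "(\<Sum>x\<in>S. f x) = (\<Sum>x\<in>S0 i. \<Sum>a<d i. f (x(i:=a)))"
proof -
  have "(\<Sum>x\<in>S0 i. \<Sum>a<d i. f (x(i:=a))) = (\<Sum>(x,a)\<in>S0 i \<times> {..<d i}. f (x(i:=a)))"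
    by (simp add: sum.cartesian_product)
  also have "\<dots> = (\<Sum>x\<in>S. f x)"
    by (rule sum.reindex_bij_witness[of _ "\<lambda>x. (x(i:=0), x i)" "\<lambda>(x,a). x(i:=a)"])
       (use i d_pos[OF i] in \<open>auto simp: S0_def upd_S S_lt\<close>)
  finally show ?thesis ..
qed

lemma split3:
  assumes i: "i < n"
  shows "(\<Sum>x\<in>S. \<Sum>y\<in>S. \<Sum>z\<in>S. F x y z) =
    (\<Sum>x\<in>S0 i. \<Sum>y\<in>S0 i. \<Sum>z\<in>S0 i. \<Sum>p<d i. \<Sum>q<d i. \<Sum>r<d i. F (x(i:=p)) (y(i:=q)) (z(i:=r)))"
  (is "_ = ?R")
proof -
  have "(\<Sum>x\<in>S. \<Sum>y\<in>S. \<Sum>z\<in>S. F x y z) =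
    (\<Sum>x\<in>S0 i. \<Sum>p<d i. \<Sum>y\<in>S0 i. \<Sum>q<d i. \<Sum>z\<in>S0 i. \<Sum>r<d i. F (x(i:=p)) (y(i:=q)) (z(i:=r)))"
    by (simp only: sum_split[OF i, of "\<lambda>z. F _ _ z"] sum_split[OF i, of "\<lambda>y. \<Sum>z\<in>S0 i. \<Sum>r<d i. F _ y (z(i:=r))"]
      sum_split[OF i, of "\<lambda>x. \<Sum>y\<in>S0 i. \<Sum>q<d i. \<Sum>z\<in>S0 i. \<Sum>r<d i. F x (y(i:=q)) (z(i:=r))"])
  also have "\<dots> = ?R"
    by (simp only: sum.swap[where A="{..<d i}" and B="S0 i"])
  finally show ?thesis .
qed

end

context PS begin

lemma split2:
  assumes i: "i < n"
  shows "(\<Sum>x\<in>S. \<Sum>y\<in>S. F x y) =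
    (\<Sum>x\<in>S0 i. \<Sum>y\<in>S0 i. \<Sum>p<d i. \<Sum>q<d i. F (x(i:=p)) (y(i:=q)))"
  (is "_ = ?R")
proof -
  have "(\<Sum>x\<in>S. \<Sum>y\<in>S. F x y) =
    (\<Sum>x\<in>S0 i. \<Sum>p<d i. \<Sum>y\<in>S0 i. \<Sum>q<d i. F (x(i:=p)) (y(i:=q)))"
    by (simp only: sum_split[OF i, of "\<lambda>y. F _ y"]
      sum_split[OF i, of "\<lambda>x. \<Sum>y\<in>S0 i. \<Sum>q<d i. F x (y(i:=q))"])
  also have "\<dots> = ?R"
    by (simp only: sum.swap[where A="{..<d i}" and B="S0 i"])
  finally show ?thesis .
qed

lemma Rm_upd[simp]: "Rm i (x(i:=p)) (y(i:=q)) = Rm i x y"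
  unfolding Rm_def by (rule prod.cong) auto

lemma R_split: "i < n \<Longrightarrow> R x y = \<rho> i (x i) (y i) * Rm i x y"
  unfolding product_state_def Rm_def by (simp add: prod.remove[of "{..<n}" i])

lemma R_upd: "i < n \<Longrightarrow> R (x(i:=p)) (y(i:=q)) = \<rho> i p q * Rm i x y"
  by (simp add: R_split[of i])

lemma trR: "(\<Sum>x\<in>S. R x x) = 1"
proof -
  have "(\<Sum>x\<in>S. R x x) = (\<Prod>k<n. \<Sum>a<d k. \<rho> k a a)"
    unfolding product_state_def basis_def by (subst prod_sum_PiE) auto
  also have "\<dots> = 1" by (rule prod.neutral) (simp add: trace1)
  finally show ?thesis .
qed

lemma Rm_tr: assumes i: "i < n" shows "(\<Sum>x\<in>S0 i. Rm i x x) = 1"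
proof -
  have "1 = (\<Sum>x\<in>S0 i. \<Sum>a<d i. R (x(i:=a)) (x(i:=a)))"
    using trR sum_split[OF i, of "\<lambda>x. R x x"] by simp
  also have "\<dots> = (\<Sum>x\<in>S0 i. Rm i x x * (\<Sum>a<d i. \<rho> i a a))"
    by (simp add: R_upd[OF i] sum_distrib_left mult.commute)
  also have "\<dots> = (\<Sum>x\<in>S0 i. Rm i x x)" by (simp add: trace1[OF i])
  finally show ?thesis by simp
qed

lemma E_eq: "E i A x y = (if x i = y i then al i A x y else 0)"
  by (simp add: cond_exp_def al_def)

lemma Ei_upd: "E i A (x(i:=p)) (y(i:=q)) = (if p = q then al i A x y else 0)"
  by (simp add: cond_exp_def al_def)

lemma al_upd[simp]: "al i A (x(i:=p)) (y(i:=q)) = al i A x y"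
  by (simp add: al_def)

lemma E_add: "E i (\<lambda>x y. A x y + B x y) = (\<lambda>x y. E i A x y + E i B x y)"
  by (auto simp: cond_exp_def sum.distrib algebra_simps intro!: ext)

lemma E_diff: "E i (\<lambda>x y. A x y - B x y) = (\<lambda>x y. E i A x y - E i B x y)"
  by (auto simp: cond_exp_def sum_subtractf algebra_simps intro!: ext)

lemma E_scale: "E i (\<lambda>x y. c * A x y) = (\<lambda>x y. c * E i A x y)"
  by (auto simp: cond_exp_def sum_distrib_left algebra_simps intro!: ext)

lemma E_zero: "E i (\<lambda>x y. 0) = (\<lambda>x y. 0)"
  by (auto simp: cond_exp_def intro!: ext)

lemma E_sum: "E i (\<lambda>x y. \<Sum>k\<in>K. f k x y) = (\<lambda>x y. \<Sum>k\<in>K. E i (f k) x y)"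
proof (intro ext)
  fix x y
  show "E i (\<lambda>x y. \<Sum>k\<in>K. f k x y) x y = (\<Sum>k\<in>K. E i (f k) x y)"
    unfolding cond_exp_def
    by (simp add: sum_distrib_left sum.swap[of _ K])
qed

lemma E_idem: assumes i: "i < n" shows "E i (E i A) = E i A"
proof (intro ext)
  fix x y
  have "E i (E i A) x y = (if x i = y i then (\<Sum>a<d i. \<Sum>b<d i. \<rho> i a b * (if b = a then al i A x y else 0)) else 0)"
    unfolding cond_exp_def[of _ _ _ "E i A"] by (simp add: Ei_upd)
  also have "\<dots> = (if x i = y i then al i A x y else 0)"
    by (simp add: mult_if0 trace1[OF i] sum_distrib_right[symmetric] cong: if_cong)
  also have "\<dots> = E i A x y" by (simp add: E_eq)
  finally show "E i (E i A) x y = E i A x y" .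
qed

lemma E_comm: assumes ij: "i \<noteq> j" shows "E i (E j A) = E j (E i A)"
proof (intro ext)
  fix x y
  have "E i (E j A) x y = (if x i = y i \<and> x j = y j then
     (\<Sum>a<d i. \<Sum>b<d i. \<Sum>c<d j. \<Sum>e<d j. \<rho> i a b * (\<rho> j c e * A (x(i:=b, j:=e)) (y(i:=a, j:=c)))) else 0)"
    using ij by (simp add: cond_exp_def sum_distrib_left)
  also have "\<dots> = (if x i = y i \<and> x j = y j then
     (\<Sum>c<d j. \<Sum>e<d j. \<Sum>a<d i. \<Sum>b<d i. \<rho> j c e * (\<rho> i a b * A (x(j:=e, i:=b)) (y(j:=c, i:=a)))) else 0)"
  proof -
    have "(\<Sum>a<d i. \<Sum>b<d i. \<Sum>c<d j. \<Sum>e<d j. \<rho> i a b * (\<rho> j c e * A (x(i:=b, j:=e)) (y(i:=a, j:=c))))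
      = (\<Sum>c<d j. \<Sum>e<d j. \<Sum>a<d i. \<Sum>b<d i. \<rho> i a b * (\<rho> j c e * A (x(i:=b, j:=e)) (y(i:=a, j:=c))))"
      by (simp only: sum.swap[where A="{..<d i}" and B="{..<d j}"])
    also have "\<dots> = (\<Sum>c<d j. \<Sum>e<d j. \<Sum>a<d i. \<Sum>b<d i. \<rho> j c e * (\<rho> i a b * A (x(j:=e, i:=b)) (y(j:=c, i:=a))))"
      using ij by (simp add: fun_upd_twist mult.left_commute)
    finally show ?thesis by simp
  qed
  also have "\<dots> = E j (E i A) x y"
    using ij by (simp add: cond_exp_def sum_distrib_left conj_commute)
  finally show "E i (E j A) x y = E j (E i A) x y" .
qed

lemma E_cong:
  assumes i: "i < n" and eq: "\<forall>x\<in>S. \<forall>y\<in>S. A x y = B x y" and x: "x \<in> S" and y: "y \<in> S"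
  shows "E i A x y = E i B x y"
  unfolding cond_exp_def using eq x y i by (auto intro!: sum.cong simp: upd_S)

end

context PS begin

lemma ex_form: "ex A = (\<Sum>x\<in>S. \<Sum>y\<in>S. R x y * A y x)"
  by (simp add: expect_def tr_def mmul_def)

lemma ex_mmul: "ex (mmul n d A C) = (\<Sum>x\<in>S. \<Sum>y\<in>S. \<Sum>z\<in>S. R x y * (A y z * C z x))"
  by (simp add: expect_def tr_def mmul_def sum_distrib_left)

lemma ex_E: assumes i: "i < n" shows "ex (E i A) = ex A"
proof -
  have "ex (E i A) = (\<Sum>x\<in>S0 i. \<Sum>y\<in>S0 i. \<Sum>p<d i. \<Sum>q<d i. R (x(i:=p)) (y(i:=q)) * E i A (y(i:=q)) (x(i:=p)))"
    unfolding ex_form by (rule split2[OF i])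
  also have "\<dots> = (\<Sum>x\<in>S0 i. \<Sum>y\<in>S0 i. \<Sum>p<d i. \<Sum>q<d i. R (x(i:=p)) (y(i:=q)) * A (y(i:=q)) (x(i:=p)))"
  proof (rule sum.cong[OF refl], rule sum.cong[OF refl])
    fix x y
    have "(\<Sum>p<d i. \<Sum>q<d i. R (x(i:=p)) (y(i:=q)) * E i A (y(i:=q)) (x(i:=p)))
        = (\<Sum>p<d i. \<rho> i p p * (Rm i x y * al i A y x))"
      by (simp add: R_upd[OF i] Ei_upd mult_if0 mult_ac cong: if_cong)
    also have "\<dots> = Rm i x y * al i A y x"
      by (simp add: sum_distrib_right[symmetric] trace1[OF i])
    also have "\<dots> = (\<Sum>p<d i. \<Sum>q<d i. R (x(i:=p)) (y(i:=q)) * A (y(i:=q)) (x(i:=p)))"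
      by (simp add: R_upd[OF i] al_def sum_distrib_left mult_ac)
    finally show "(\<Sum>p<d i. \<Sum>q<d i. R (x(i:=p)) (y(i:=q)) * E i A (y(i:=q)) (x(i:=p)))
        = (\<Sum>p<d i. \<Sum>q<d i. R (x(i:=p)) (y(i:=q)) * A (y(i:=q)) (x(i:=p)))" .
  qed
  also have "\<dots> = ex A"
    unfolding ex_form by (rule split2[OF i, symmetric])
  finally show ?thesis .
qed

lemma ex_a1: assumes i: "i < n"
  shows "ex (mmul n d A (E i B)) = ex (mmul n d (E i A) (E i B))"
proof -
  have "ex (mmul n d A (E i B)) = (\<Sum>x\<in>S0 i. \<Sum>y\<in>S0 i. \<Sum>z\<in>S0 i. \<Sum>p<d i. \<Sum>q<d i. \<Sum>r<d i.
      R (x(i:=p)) (y(i:=q)) * (A (y(i:=q)) (z(i:=r)) * E i B (z(i:=r)) (x(i:=p))))"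
    unfolding ex_mmul by (rule split3[OF i])
  also have "\<dots> = (\<Sum>x\<in>S0 i. \<Sum>y\<in>S0 i. \<Sum>z\<in>S0 i. \<Sum>p<d i. \<Sum>q<d i. \<Sum>r<d i.
      R (x(i:=p)) (y(i:=q)) * (E i A (y(i:=q)) (z(i:=r)) * E i B (z(i:=r)) (x(i:=p))))"
  proof (rule sum.cong[OF refl], rule sum.cong[OF refl], rule sum.cong[OF refl])
    fix x y z
    have "(\<Sum>p<d i. \<Sum>q<d i. \<Sum>r<d i. R (x(i:=p)) (y(i:=q)) * (A (y(i:=q)) (z(i:=r)) * E i B (z(i:=r)) (x(i:=p))))
       = (\<Sum>p<d i. \<Sum>q<d i. \<rho> i p q * A (y(i:=q)) (z(i:=p)) * (Rm i x y * al i B z x))"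
      by (simp add: R_upd[OF i] Ei_upd mult_if0 mult_ac cong: if_cong)
    also have "\<dots> = al i A y z * (Rm i x y * al i B z x)"
      by (simp add: al_def sum_distrib_right)
    also have "\<dots> = (\<Sum>p<d i. \<rho> i p p * (al i A y z * (Rm i x y * al i B z x)))"
      by (simp add: sum_distrib_right[symmetric] trace1[OF i])
    also have "\<dots> = (\<Sum>p<d i. \<Sum>q<d i. \<Sum>r<d i. R (x(i:=p)) (y(i:=q)) * (E i A (y(i:=q)) (z(i:=r)) * E i B (z(i:=r)) (x(i:=p))))"
      by (simp add: R_upd[OF i] Ei_upd mult_if0 if0_mult mult_ac cong: if_cong)
    finally show "(\<Sum>p<d i. \<Sum>q<d i. \<Sum>r<d i. R (x(i:=p)) (y(i:=q)) * (A (y(i:=q)) (z(i:=r)) * E i B (z(i:=r)) (x(i:=p))))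
       = (\<Sum>p<d i. \<Sum>q<d i. \<Sum>r<d i. R (x(i:=p)) (y(i:=q)) * (E i A (y(i:=q)) (z(i:=r)) * E i B (z(i:=r)) (x(i:=p))))" .
  qed
  also have "\<dots> = ex (mmul n d (E i A) (E i B))"
    unfolding ex_mmul by (rule split3[OF i, symmetric])
  finally show ?thesis .
qed

lemma ex_a2: assumes i: "i < n"
  shows "ex (mmul n d (E i A) B) = ex (mmul n d (E i A) (E i B))"
proof -
  have "ex (mmul n d (E i A) B) = (\<Sum>x\<in>S0 i. \<Sum>y\<in>S0 i. \<Sum>z\<in>S0 i. \<Sum>p<d i. \<Sum>q<d i. \<Sum>r<d i.
      R (x(i:=p)) (y(i:=q)) * (E i A (y(i:=q)) (z(i:=r)) * B (z(i:=r)) (x(i:=p))))"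
    unfolding ex_mmul by (rule split3[OF i])
  also have "\<dots> = (\<Sum>x\<in>S0 i. \<Sum>y\<in>S0 i. \<Sum>z\<in>S0 i. \<Sum>p<d i. \<Sum>q<d i. \<Sum>r<d i.
      R (x(i:=p)) (y(i:=q)) * (E i A (y(i:=q)) (z(i:=r)) * E i B (z(i:=r)) (x(i:=p))))"
  proof (rule sum.cong[OF refl], rule sum.cong[OF refl], rule sum.cong[OF refl])
    fix x y z
    have "(\<Sum>p<d i. \<Sum>q<d i. \<Sum>r<d i. R (x(i:=p)) (y(i:=q)) * (E i A (y(i:=q)) (z(i:=r)) * B (z(i:=r)) (x(i:=p))))
       = (\<Sum>p<d i. \<Sum>q<d i. \<rho> i p q * B (z(i:=q)) (x(i:=p)) * (Rm i x y * al i A y z))"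
      by (simp add: R_upd[OF i] Ei_upd mult_if0 if0_mult mult_ac cong: if_cong)
    also have "\<dots> = al i B z x * (Rm i x y * al i A y z)"
      by (simp add: al_def sum_distrib_right)
    also have "\<dots> = (\<Sum>p<d i. \<rho> i p p * (al i B z x * (Rm i x y * al i A y z)))"
      by (simp add: sum_distrib_right[symmetric] trace1[OF i])
    also have "\<dots> = (\<Sum>p<d i. \<Sum>q<d i. \<Sum>r<d i. R (x(i:=p)) (y(i:=q)) * (E i A (y(i:=q)) (z(i:=r)) * E i B (z(i:=r)) (x(i:=p))))"
      by (simp add: R_upd[OF i] Ei_upd mult_if0 if0_mult mult_ac cong: if_cong)
    finally show "(\<Sum>p<d i. \<Sum>q<d i. \<Sum>r<d i. R (x(i:=p)) (y(i:=q)) * (E i A (y(i:=q)) (z(i:=r)) * B (z(i:=r)) (x(i:=p))))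
       = (\<Sum>p<d i. \<Sum>q<d i. \<Sum>r<d i. R (x(i:=p)) (y(i:=q)) * (E i A (y(i:=q)) (z(i:=r)) * E i B (z(i:=r)) (x(i:=p))))" .
  qed
  also have "\<dots> = ex (mmul n d (E i A) (E i B))"
    unfolding ex_mmul by (rule split3[OF i, symmetric])
  finally show ?thesis .
qed

end

lemma sum4_reorder:
  "(\<Sum>x\<in>A. \<Sum>y\<in>A. \<Sum>z\<in>A. \<Sum>k\<in>A. f x y z k) = (\<Sum>z\<in>A. \<Sum>k\<in>A. \<Sum>x\<in>A. \<Sum>y\<in>A. f x y z k)"
proof -
  have "(\<Sum>x\<in>A. \<Sum>y\<in>A. \<Sum>z\<in>A. \<Sum>k\<in>A. f x y z k) = (\<Sum>x\<in>A. \<Sum>z\<in>A. \<Sum>y\<in>A. \<Sum>k\<in>A. f x y z k)"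
    by (rule sum.cong[OF refl], rule sum.swap)
  also have "\<dots> = (\<Sum>x\<in>A. \<Sum>z\<in>A. \<Sum>k\<in>A. \<Sum>y\<in>A. f x y z k)"
    by (rule sum.cong[OF refl], rule sum.cong[OF refl], rule sum.swap)
  also have "\<dots> = (\<Sum>z\<in>A. \<Sum>x\<in>A. \<Sum>k\<in>A. \<Sum>y\<in>A. f x y z k)"
    by (rule sum.swap)
  also have "\<dots> = (\<Sum>z\<in>A. \<Sum>k\<in>A. \<Sum>x\<in>A. \<Sum>y\<in>A. f x y z k)"
    by (rule sum.cong[OF refl], rule sum.swap)
  finally show ?thesis .
qed

context PS begin

lemma ex_add: "ex (\<lambda>x y. A x y + B x y) = ex A + ex B"
  by (simp add: ex_form distrib_left sum.distrib)
lemma ex_diff: "ex (\<lambda>x y. A x y - B x y) = ex A - ex B"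
  by (simp add: ex_form right_diff_distrib sum_subtractf)
lemma ex_scale: "ex (\<lambda>x y. c * A x y) = c * ex A"
  by (simp add: ex_form sum_distrib_left mult_ac)
lemma ex_sum: "ex (\<lambda>x y. \<Sum>k\<in>K. f k x y) = (\<Sum>k\<in>K. ex (f k))"
  by (simp add: ex_form sum_distrib_left sum.swap[of _ K])
lemma ex_zero: "ex (\<lambda>x y. 0) = 0"
  by (simp add: ex_form)
lemma ex_cong: "(\<forall>x\<in>S. \<forall>y\<in>S. A x y = B x y) \<Longrightarrow> ex A = ex B"
  by (simp add: ex_form)

lemma mmul_cong: "(\<forall>x\<in>S. \<forall>y\<in>S. A x y = A' x y) \<Longrightarrow> (\<forall>x\<in>S. \<forall>y\<in>S. B x y = B' x y) \<Longrightarrow>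
   x \<in> S \<Longrightarrow> y \<in> S \<Longrightarrow> mmul n d A B x y = mmul n d A' B' x y"
  by (simp add: mmul_def)

lemma ex_mmul_cong: "(\<forall>x\<in>S. \<forall>y\<in>S. A x y = A' x y) \<Longrightarrow> (\<forall>x\<in>S. \<forall>y\<in>S. B x y = B' x y) \<Longrightarrow>
   ex (mmul n d A B) = ex (mmul n d A' B')"
  by (rule ex_cong) (simp add: mmul_cong)

lemma mmul_diff2: "mmul n d (\<lambda>x y. A x y - C x y) (\<lambda>x y. A x y - C x y) =
  (\<lambda>x y. mmul n d A A x y - mmul n d A C x y - mmul n d C A x y + mmul n d C C x y)"
proof (intro ext)
  fix x y
  have e: "(A x z - C x z) * (A z y - C z y) = A x z * A z y - A x z * C z y - C x z * A z y + C x z * C z y" for z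
    by (simp add: algebra_simps)
  show "mmul n d (\<lambda>x y. A x y - C x y) (\<lambda>x y. A x y - C x y) x y =
    mmul n d A A x y - mmul n d A C x y - mmul n d C A x y + mmul n d C C x y"
    unfolding mmul_def e by (simp only: sum.distrib sum_subtractf)
qed

lemma ex_dev: assumes i: "i < n"
  shows "ex (mmul n d (cond_dev d \<rho> i A) (cond_dev d \<rho> i A)) = ex (mmul n d A A) - ex (mmul n d (E i A) (E i A))"
proof -
  have "ex (mmul n d (cond_dev d \<rho> i A) (cond_dev d \<rho> i A)) =
     ex (mmul n d A A) - ex (mmul n d A (E i A)) - ex (mmul n d (E i A) A) + ex (mmul n d (E i A) (E i A))"
    unfolding cond_dev_def mmul_diff2 by (simp add: ex_add ex_diff)
  also have "\<dots> = ex (mmul n d A A) - ex (mmul n d (E i A) (E i A))"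
    by (simp add: ex_a1[OF i, of A A] ex_a2[OF i, of A A])
  finally show ?thesis .
qed

lemma herm_E: assumes i: "i < n" and h: "hermitian n d A" shows "hermitian n d (E i A)"
  unfolding hermitian_def
proof (intro ballI)
  fix x y assume x: "x \<in> S" and y: "y \<in> S"
  have "cnj (E i A y x) = (if x i = y i then (\<Sum>a<d i. \<Sum>b<d i. cnj (\<rho> i a b) * cnj (A (y(i:=b)) (x(i:=a)))) else 0)"
    by (auto simp: cond_exp_def)
  also have "\<dots> = (if x i = y i then (\<Sum>a<d i. \<Sum>b<d i. \<rho> i b a * A (x(i:=a)) (y(i:=b))) else 0)"
  proof -
    have "cnj (\<rho> i a b) * cnj (A (y(i:=b)) (x(i:=a))) = \<rho> i b a * A (x(i:=a)) (y(i:=b))"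
      if "a < d i" "b < d i" for a b
    proof -
      have 1: "\<rho> i b a = cnj (\<rho> i a b)" using herm_rho[OF i that(2) that(1)] .
      have 2: "A (x(i:=a)) (y(i:=b)) = cnj (A (y(i:=b)) (x(i:=a)))"
        using h upd_S[OF x i that(1)] upd_S[OF y i that(2)] unfolding hermitian_def by blast
      show ?thesis by (simp only: 1 2)
    qed
    then show ?thesis by (auto intro!: sum.cong)
  qed
  also have "\<dots> = E i A x y"
    unfolding cond_exp_def
    using sum.swap[of "\<lambda>a b. \<rho> i b a * A (x(i:=a)) (y(i:=b))" "{..<d i}" "{..<d i}"] by simp
  finally show "E i A x y = cnj (E i A y x)" by simp
qed

lemma herm_dev: assumes i: "i < n" and h: "hermitian n d A" shows "hermitian n d (cond_dev d \<rho> i A)"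
  unfolding hermitian_def cond_dev_def
proof (intro ballI)
  fix x y assume x: "x \<in> S" and y: "y \<in> S"
  have 1: "A x y = cnj (A y x)" using h x y unfolding hermitian_def by blast
  have 2: "E i A x y = cnj (E i A y x)" using herm_E[OF i h] x y unfolding hermitian_def by blast
  show "A x y - E i A x y = cnj (A y x - E i A y x)" by (simp only: 1 2 complex_cnj_diff)
qed

end

context PS begin

lemma rho_decomp: "\<exists>W. \<forall>i<n. \<forall>a<d i. \<forall>b<d i. \<rho> i a b = (\<Sum>k<d i. W i k a * cnj (W i k b))"
proof -
  have "\<forall>i\<in>{..<n}. \<exists>w. \<forall>a<d i. \<forall>b<d i. \<rho> i a b = (\<Sum>k<d i. w k a * cnj (w k b))"
  proof
    fix i assume "i \<in> {..<n}"
    then have "density_matrix (d i) (\<rho> i)" using states by simp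
    then show "\<exists>w. \<forall>a<d i. \<forall>b<d i. \<rho> i a b = (\<Sum>k<d i. w k a * cnj (w k b))"
      unfolding density_matrix_def by (intro psd_decomp) blast+
  qed
  from bchoice[OF this] obtain W where "\<forall>i\<in>{..<n}. \<forall>a<d i. \<forall>b<d i. \<rho> i a b = (\<Sum>k<d i. W i k a * cnj (W i k b))"
    by blast
  then show ?thesis by auto
qed

lemma R_decomp: "\<exists>Wp. \<forall>x\<in>S. \<forall>y\<in>S. R x y = (\<Sum>\<kappa>\<in>S. Wp \<kappa> x * cnj (Wp \<kappa> y))"
proof -
  obtain W where W: "\<forall>i<n. \<forall>a<d i. \<forall>b<d i. \<rho> i a b = (\<Sum>k<d i. W i k a * cnj (W i k b))"
    using rho_decomp by blast
  define Wp where "Wp = (\<lambda>\<kappa> x. \<Prod>k<n. W k (\<kappa> k) (x k))"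
  have "R x y = (\<Sum>\<kappa>\<in>S. Wp \<kappa> x * cnj (Wp \<kappa> y))" if x: "x \<in> S" and y: "y \<in> S" for x y
  proof -
    have "R x y = (\<Prod>k<n. \<Sum>c<d k. W k c (x k) * cnj (W k c (y k)))"
      unfolding product_state_def
    proof (rule prod.cong[OF refl])
      fix k assume "k \<in> {..<n}"
      then have k: "k < n" by simp
      show "\<rho> k (x k) (y k) = (\<Sum>c<d k. W k c (x k) * cnj (W k c (y k)))"
        using W k S_lt[OF x k] S_lt[OF y k] by blast
    qed
    also have "\<dots> = (\<Sum>\<kappa>\<in>S. \<Prod>k<n. W k (\<kappa> k) (x k) * cnj (W k (\<kappa> k) (y k)))"
      unfolding basis_def by (rule prod_sum_PiE) auto
    also have "\<dots> = (\<Sum>\<kappa>\<in>S. Wp \<kappa> x * cnj (Wp \<kappa> y))"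
      unfolding Wp_def by (simp add: prod.distrib cnj_prod)
    finally show ?thesis .
  qed
  then show ?thesis by blast
qed

lemma cnj_self_nonneg: "0 \<le> cnj (s::complex) * s"
  unfolding cnj_mult_self by (simp add: less_eq_complex_def)

lemma psd_ex: assumes h: "hermitian n d B" shows "0 \<le> ex (mmul n d B B)"
proof -
  obtain Wp where Wp: "\<forall>x\<in>S. \<forall>y\<in>S. R x y = (\<Sum>\<kappa>\<in>S. Wp \<kappa> x * cnj (Wp \<kappa> y))"
    using R_decomp by blast
  define u where "u = (\<lambda>z \<kappa>. \<Sum>y\<in>S. cnj (Wp \<kappa> y) * B y z)"
  have "ex (mmul n d B B) = (\<Sum>x\<in>S. \<Sum>y\<in>S. \<Sum>z\<in>S. \<Sum>\<kappa>\<in>S. (Wp \<kappa> x * B z x) * (cnj (Wp \<kappa> y) * B y z))"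
    unfolding ex_mmul
  proof (rule sum.cong[OF refl], rule sum.cong[OF refl], rule sum.cong[OF refl])
    fix x y z assume x: "x \<in> S" and y: "y \<in> S" and z: "z \<in> S"
    show "R x y * (B y z * B z x) = (\<Sum>\<kappa>\<in>S. (Wp \<kappa> x * B z x) * (cnj (Wp \<kappa> y) * B y z))"
      using Wp x y by (simp add: sum_distrib_left sum_distrib_right mult_ac)
  qed
  also have "\<dots> = (\<Sum>z\<in>S. \<Sum>\<kappa>\<in>S. \<Sum>x\<in>S. \<Sum>y\<in>S. (Wp \<kappa> x * B z x) * (cnj (Wp \<kappa> y) * B y z))"
    by (rule sum4_reorder)
  also have "\<dots> = (\<Sum>z\<in>S. \<Sum>\<kappa>\<in>S. cnj (u z \<kappa>) * u z \<kappa>)"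
  proof (rule sum.cong[OF refl], rule sum.cong[OF refl])
    fix z \<kappa> assume z: "z \<in> S"
    have "cnj (u z \<kappa>) = (\<Sum>x\<in>S. Wp \<kappa> x * B z x)"
      unfolding u_def
    proof (simp only: cnj_sum, rule sum.cong[OF refl])
      fix x assume x: "x \<in> S"
      have "B z x = cnj (B x z)" using h x z unfolding hermitian_def by blast
      then show "cnj (cnj (Wp \<kappa> x) * B x z) = Wp \<kappa> x * B z x" by simp
    qed
    then show "(\<Sum>x\<in>S. \<Sum>y\<in>S. (Wp \<kappa> x * B z x) * (cnj (Wp \<kappa> y) * B y z)) = cnj (u z \<kappa>) * u z \<kappa>"
      by (simp add: u_def sum_product)
  qed
  also have "0 \<le> \<dots>"
    by (intro sum_nonneg cnj_self_nonneg)
  finally show ?thesis by simp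
qed

lemma contr_E: assumes i: "i < n" and h: "hermitian n d A"
  shows "ex (mmul n d (E i A) (E i A)) \<le> ex (mmul n d A A)"
proof -
  have "0 \<le> ex (mmul n d (cond_dev d \<rho> i A) (cond_dev d \<rho> i A))"
    by (rule psd_ex[OF herm_dev[OF i h]])
  then show ?thesis unfolding ex_dev[OF i] by simp
qed

primrec Pk :: "nat \<Rightarrow> op \<Rightarrow> op" where
  "Pk 0 A = A"
| "Pk (Suc k) A = Pk k (E k A)"

lemma P_diff: "Pk k (\<lambda>x y. A x y - B x y) = (\<lambda>x y. Pk k A x y - Pk k B x y)"
  by (induction k arbitrary: A B) (simp_all add: E_diff)

lemma P_zero: "Pk k (\<lambda>x y. 0) = (\<lambda>x y. 0)"
  by (induction k) (simp_all add: E_zero)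

lemma P_comm: "k \<le> j \<Longrightarrow> E j (Pk k A) = Pk k (E j A)"
proof (induction k arbitrary: A)
  case 0 then show ?case by simp
next
  case (Suc k)
  have "E j (Pk (Suc k) A) = Pk k (E j (E k A))" using Suc by simp
  also have "\<dots> = Pk k (E k (E j A))" using Suc.prems by (simp add: E_comm)
  finally show ?case by simp
qed

lemma P_absorb: "i < k \<Longrightarrow> k \<le> n \<Longrightarrow> E i (Pk k A) = Pk k A"
proof (induction k arbitrary: A)
  case 0 then show ?case by simp
next
  case (Suc k)
  show ?case
  proof (cases "i < k")
    case True
    then show ?thesis using Suc by simp
  next
    case False
    then have ik: "i = k" using Suc.prems by simp
    have "E i (Pk (Suc k) A) = Pk k (E k (E k A))" using ik by (simp add: P_comm)
    also have "\<dots> = Pk k (E k A)" using Suc.prems ik by (simp add: E_idem)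
    finally show ?thesis by simp
  qed
qed

lemma ex_P: "k \<le> n \<Longrightarrow> ex (Pk k A) = ex A"
  by (induction k arbitrary: A) (simp_all add: ex_E)

lemma herm_P: "k \<le> n \<Longrightarrow> hermitian n d A \<Longrightarrow> hermitian n d (Pk k A)"
  by (induction k arbitrary: A) (simp_all add: herm_E)

lemma contr_P: "k \<le> n \<Longrightarrow> hermitian n d A \<Longrightarrow> ex (mmul n d (Pk k A) (Pk k A)) \<le> ex (mmul n d A A)"
proof (induction k arbitrary: A)
  case 0 then show ?case by simp
next
  case (Suc k)
  have "ex (mmul n d (Pk (Suc k) A) (Pk (Suc k) A)) \<le> ex (mmul n d (E k A) (E k A))"
    using Suc.IH[of "E k A"] Suc.prems herm_E[of k A] by simp
  also have "\<dots> \<le> ex (mmul n d A A)" using contr_E[of k A] Suc.prems by simp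
  finally show ?case .
qed

end

context PS begin

lemma walk:
  assumes inv: "\<And>f i c. i < n \<Longrightarrow> g (f(i:=c)) = g f" and x: "x \<in> S" and y: "y \<in> S"
  shows "g x = g y"
proof -
  define m where "m = (\<lambda>k j. if j < k then y j else x j)"
  have step: "g (m k) = g x" if "k \<le> n" for k
    using that
  proof (induction k)
    case 0 then show ?case by (simp add: m_def)
  next
    case (Suc k)
    have "m (Suc k) = (m k)(k := y k)" by (auto simp: m_def)
    then have "g (m (Suc k)) = g (m k)" using inv[of k "m k" "y k"] Suc.prems by simp
    then show ?case using Suc by simp
  qed
  have "m n = y"
  proof
    fix j show "m n j = y j" using x y unfolding m_def mem_S by auto
  qed
  then show ?thesis using step[of n] by simp
qed

lemma inv_const:
  assumes inv: "\<forall>i<n. E i Z = Z"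
  shows "\<exists>e. \<forall>x\<in>S. \<forall>y\<in>S. Z x y = (if x = y then e else 0)"
proof -
  define x0 :: idx where "x0 = (\<lambda>j. if j < n then 0 else undefined)"
  have x0: "x0 \<in> S" using d_pos by (auto simp: mem_S x0_def)
  have diag: "Z f f = Z x0 x0" if "f \<in> S" for f
  proof (rule walk[where g = "\<lambda>f. Z f f", OF _ that x0])
    fix h i c assume i: "i < n"
    have "Z (h(i:=c)) (h(i:=c)) = E i Z (h(i:=c)) (h(i:=c))" using inv i by simp
    also have "\<dots> = al i Z h h" by (simp add: Ei_upd)
    also have "\<dots> = E i Z h h" by (simp add: E_eq)
    also have "\<dots> = Z h h" using inv i by simp
    finally show "Z (h(i:=c)) (h(i:=c)) = Z h h" .
  qed
  have off: "Z x y = 0" if xS: "x \<in> S" and yS: "y \<in> S" and ne: "x \<noteq> y" for x y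
  proof -
    obtain i where i: "i < n" "x i \<noteq> y i" using S_eq[OF xS yS] ne by blast
    have "Z x y = E i Z x y" using inv i by simp
    also have "\<dots> = 0" using i by (simp add: E_eq)
    finally show ?thesis .
  qed
  show ?thesis using diag off by (intro exI[of _ "Z x0 x0"]) auto
qed

lemma mmul_sum: "mmul n d (\<lambda>x y. \<Sum>k\<in>K. f k x y) (\<lambda>x y. \<Sum>l\<in>L. g l x y) =
   (\<lambda>x y. \<Sum>k\<in>K. \<Sum>l\<in>L. mmul n d (f k) (g l) x y)"
proof (intro ext)
  fix x y
  have "mmul n d (\<lambda>x y. \<Sum>k\<in>K. f k x y) (\<lambda>x y. \<Sum>l\<in>L. g l x y) x y
      = (\<Sum>z\<in>S. \<Sum>k\<in>K. \<Sum>l\<in>L. f k x z * g l z y)"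
    by (simp add: mmul_def sum_product)
  also have "\<dots> = (\<Sum>k\<in>K. \<Sum>z\<in>S. \<Sum>l\<in>L. f k x z * g l z y)"
    by (rule sum.swap)
  also have "\<dots> = (\<Sum>k\<in>K. \<Sum>l\<in>L. \<Sum>z\<in>S. f k x z * g l z y)"
    by (rule sum.cong[OF refl], rule sum.swap)
  finally show "mmul n d (\<lambda>x y. \<Sum>k\<in>K. f k x y) (\<lambda>x y. \<Sum>l\<in>L. g l x y) x y =
      (\<Sum>k\<in>K. \<Sum>l\<in>L. mmul n d (f k) (g l) x y)"
    by (simp add: mmul_def)
qed

lemma ex_mmul_zero1: "ex (mmul n d (\<lambda>x y. 0) B) = 0"
  by (simp add: mmul_def ex_form)
lemma ex_mmul_zero2: "ex (mmul n d B (\<lambda>x y. 0)) = 0"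
  by (simp add: mmul_def ex_form)

definition Dl where "Dl X k = Pk k (cond_dev d \<rho> k X)"

lemma Dl_eq: "Dl X k = (\<lambda>x y. Pk k X x y - Pk (Suc k) X x y)"
  by (simp add: Dl_def cond_dev_def P_diff)

lemma E_Dl_self: assumes k: "k < n" shows "E k (Dl X k) = (\<lambda>x y. 0)"
proof -
  have "E k (Dl X k) = Pk k (E k (cond_dev d \<rho> k X))" by (simp add: Dl_def P_comm)
  also have "E k (cond_dev d \<rho> k X) = (\<lambda>x y. 0)"
    unfolding cond_dev_def E_diff E_idem[OF k] by simp
  finally show ?thesis by (simp add: P_zero)
qed

lemma cross_zero: assumes k: "k < n" and l: "l < n" and kl: "k \<noteq> l"
  shows "ex (mmul n d (Dl X k) (Dl X l)) = 0"
proof (cases "k < l")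
  case True
  have "E k (Dl X l) = Dl X l" unfolding Dl_def using True l by (simp add: P_absorb)
  then have "ex (mmul n d (Dl X k) (Dl X l)) = ex (mmul n d (Dl X k) (E k (Dl X l)))" by simp
  also have "\<dots> = ex (mmul n d (E k (Dl X k)) (E k (Dl X l)))" by (rule ex_a1[OF k])
  also have "\<dots> = 0" by (simp add: E_Dl_self[OF k] ex_mmul_zero1)
  finally show ?thesis .
next
  case False
  then have lk: "l < k" using kl by simp
  have "E l (Dl X k) = Dl X k" unfolding Dl_def using lk k by (simp add: P_absorb)
  then have "ex (mmul n d (Dl X k) (Dl X l)) = ex (mmul n d (E l (Dl X k)) (Dl X l))" by simp
  also have "\<dots> = ex (mmul n d (E l (Dl X k)) (E l (Dl X l)))" by (rule ex_a2[OF l])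
  also have "\<dots> = 0" by (simp add: E_Dl_self[OF l] ex_mmul_zero2)
  finally show ?thesis .
qed

lemma efron_stein: assumes h: "hermitian n d X"
  shows "var n d R X \<le> (\<Sum>k<n. ex (mmul n d (cond_dev d \<rho> k X) (cond_dev d \<rho> k X)))"
proof -
  define c where "c = ex X"
  define Pn where "Pn = Pk n X"
  obtain e where e: "\<forall>x\<in>S. \<forall>y\<in>S. Pn x y = (if x = y then e else 0)"
    using inv_const[of Pn] unfolding Pn_def by (auto simp: P_absorb)
  define Ie :: op where "Ie = (\<lambda>x y. if x = y then e else 0)"
  have PnS: "\<forall>x\<in>S. \<forall>y\<in>S. Pn x y = Ie x y" using e by (simp add: Ie_def)
  have exIe: "ex (\<lambda>x y. a * Ie x y) = a * e" for a
    by (simp add: ex_form Ie_def if_distrib[where f="\<lambda>z. _ * z"] sum.delta' trR sum_distrib_left[symmetric] mult_ac cong: if_cong)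
  have ec: "e = c"
  proof -
    have "c = ex Pn" unfolding c_def Pn_def by (simp add: ex_P)
    also have "\<dots> = ex (\<lambda>x y. 1 * Ie x y)" by (rule ex_cong) (simp add: PnS)
    also have "\<dots> = e" using exIe[of 1] by simp
    finally show ?thesis by simp
  qed
  have mXI: "\<forall>x\<in>S. \<forall>y\<in>S. mmul n d X Ie x y = e * X x y"
    by (simp add: mmul_def Ie_def mult_if0 sum.delta mult.commute cong: if_cong)
  have mIX: "\<forall>x\<in>S. \<forall>y\<in>S. mmul n d Ie X x y = e * X x y"
    by (simp add: mmul_def Ie_def if0_mult sum.delta cong: if_cong)
  have mII: "\<forall>x\<in>S. \<forall>y\<in>S. mmul n d Ie Ie x y = e * Ie x y"
    by (simp add: mmul_def Ie_def if0_mult sum.delta cong: if_cong)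
  define Y where "Y = (\<lambda>x y. X x y - Pn x y)"
  have "ex (mmul n d Y Y) = ex (mmul n d X X) - ex (mmul n d X Pn) - ex (mmul n d Pn X) + ex (mmul n d Pn Pn)"
    unfolding Y_def mmul_diff2 by (simp add: ex_add ex_diff)
  also have "ex (mmul n d X Pn) = c * c"
  proof -
    have "ex (mmul n d X Pn) = ex (mmul n d X Ie)" by (rule ex_mmul_cong) (simp_all add: PnS)
    also have "\<dots> = ex (\<lambda>x y. e * X x y)" by (rule ex_cong) (simp add: mXI)
    finally show ?thesis by (simp add: ex_scale ec c_def)
  qed
  also have "ex (mmul n d Pn X) = c * c"
  proof -
    have "ex (mmul n d Pn X) = ex (mmul n d Ie X)" by (rule ex_mmul_cong) (simp_all add: PnS)
    also have "\<dots> = ex (\<lambda>x y. e * X x y)" by (rule ex_cong) (simp add: mIX)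
    finally show ?thesis by (simp add: ex_scale ec c_def)
  qed
  also have "ex (mmul n d Pn Pn) = c * c"
  proof -
    have "ex (mmul n d Pn Pn) = ex (mmul n d Ie Ie)" by (rule ex_mmul_cong) (simp_all add: PnS)
    also have "\<dots> = ex (\<lambda>x y. e * Ie x y)" by (rule ex_cong) (simp add: mII)
    finally show ?thesis by (simp add: exIe ec)
  qed
  finally have varY: "ex (mmul n d Y Y) = var n d R X"
    by (simp add: var_def c_def power2_eq_square)
  have Ysum: "Y = (\<lambda>x y. \<Sum>k<n. Dl X k x y)"
  proof (intro ext)
    fix x y
    have "(\<Sum>k<n. Pk k X x y - Pk (Suc k) X x y) = Pk 0 X x y - Pk n X x y"
      by (rule sum_lessThan_telescope')
    then show "Y x y = (\<Sum>k<n. Dl X k x y)"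
      by (simp add: Y_def Pn_def Dl_eq del: Pk.simps(2))
  qed
  have "ex (mmul n d Y Y) = (\<Sum>k<n. \<Sum>l<n. ex (mmul n d (Dl X k) (Dl X l)))"
    unfolding Ysum mmul_sum by (simp add: ex_sum)
  also have "\<dots> = (\<Sum>k<n. ex (mmul n d (Dl X k) (Dl X k)))"
  proof (rule sum.cong[OF refl])
    fix k assume "k \<in> {..<n}"
    then have k: "k < n" by simp
    have "(\<Sum>l<n. ex (mmul n d (Dl X k) (Dl X l))) = (\<Sum>l<n. if l = k then ex (mmul n d (Dl X k) (Dl X k)) else 0)"
      by (rule sum.cong[OF refl]) (use cross_zero k in auto)
    also have "\<dots> = ex (mmul n d (Dl X k) (Dl X k))" using k by simp
    finally show "(\<Sum>l<n. ex (mmul n d (Dl X k) (Dl X l))) = ex (mmul n d (Dl X k) (Dl X k))" .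
  qed
  also have "\<dots> \<le> (\<Sum>k<n. ex (mmul n d (cond_dev d \<rho> k X) (cond_dev d \<rho> k X)))"
  proof (rule sum_mono)
    fix k assume "k \<in> {..<n}"
    then have k: "k < n" by simp
    show "ex (mmul n d (Dl X k) (Dl X k)) \<le> ex (mmul n d (cond_dev d \<rho> k X) (cond_dev d \<rho> k X))"
      unfolding Dl_def using contr_P[of k "cond_dev d \<rho> k X"] herm_dev[OF k h] k by simp
  qed
  finally show ?thesis using varY by simp
qed

end

context PS begin

definition sw :: "nat \<Rightarrow> idx \<times> idx \<Rightarrow> idx \<times> idx" where
  "sw i p = ((fst p)(i := snd p i), (snd p)(i := fst p i))"

lemma sw_inv[simp]: "sw i (sw i p) = p"
  by (cases p) (simp add: sw_def)

lemma sw_S: "p \<in> S \<times> S \<Longrightarrow> i < n \<Longrightarrow> sw i p \<in> S \<times> S"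
  by (cases p) (auto simp: sw_def upd_S S_lt)

lemma swap_op_eq: "swap_op i s p = (if p = sw i s then 1 else 0)"
  by (cases s, cases p) (auto simp: swap_op_def sw_def)

lemma mF: assumes p: "p \<in> S \<times> S" and i: "i < n"
  shows "mmul2 n d M (swap_op i) q p = M q (sw i p)"
proof -
  have "mmul2 n d M (swap_op i) q p = (\<Sum>s\<in>S \<times> S. if s = sw i p then M q s else 0)"
    unfolding mmul2_def swap_op_eq
  proof (rule sum.cong[OF refl])
    fix s
    have "(p = sw i s) = (s = sw i p)" by (metis sw_inv)
    then show "M q s * (if p = sw i s then 1 else 0) = (if s = sw i p then M q s else 0)" by simp
  qed
  also have "\<dots> = M q (sw i p)" using sw_S[OF p i] by (simp add: sum.delta')
  finally show ?thesis .
qed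

lemma sum_SxS: "(\<Sum>p\<in>S \<times> S. f p) = (\<Sum>x\<in>S. \<Sum>x'\<in>S. f (x, x'))"
  by (simp add: sum.cartesian_product)

lemma L3: assumes i: "i < n" and e: "e < d i"
  shows "(\<Sum>y'\<in>S. R y' (y'(i:=e)) * f (y' i)) = (\<Sum>c<d i. \<rho> i c e * f c)"
proof -
  have "(\<Sum>y'\<in>S. R y' (y'(i:=e)) * f (y' i)) = (\<Sum>u\<in>S0 i. \<Sum>c<d i. R (u(i:=c)) ((u(i:=c))(i:=e)) * f c)"
    by (simp add: sum_split[OF i])
  also have "\<dots> = (\<Sum>u\<in>S0 i. Rm i u u * (\<Sum>c<d i. \<rho> i c e * f c))"
    by (simp add: R_upd[OF i] sum_distrib_left mult_ac)
  also have "\<dots> = (\<Sum>c<d i. \<rho> i c e * f c)"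
    by (simp add: sum_distrib_right[symmetric] Rm_tr[OF i])
  finally show ?thesis .
qed

end

context PS begin

lemma swap_expand:
  assumes i: "i < n"
  shows "expect2 n d (tensor R R) (mmul2 n d (mmul2 n d (mmul2 n d (ext_id A) (swap_op i)) (ext_id A)) (swap_op i))
    = (\<Sum>y\<in>S. \<Sum>y'\<in>S. \<Sum>x\<in>S. \<Sum>x'\<in>S. \<Sum>z\<in>S. \<Sum>z'\<in>S.
        R y x * R y' x' * ((A x (z(i := z' i)) * (if x' = z'(i := z i) then 1 else 0)) *
          (A z (y(i := y' i)) * (if z' = y'(i := y i) then 1 else 0))))"
  (is "_ = ?R")
proof -
  let ?AI = "ext_id A" and ?F = "swap_op i"
  have G: "mmul2 n d (mmul2 n d (mmul2 n d ?AI ?F) ?AI) ?F q p = (\<Sum>t\<in>S \<times> S. ?AI q (sw i t) * ?AI t (sw i p))"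
    if p: "p \<in> S \<times> S" for p q
  proof -
    have "mmul2 n d (mmul2 n d (mmul2 n d ?AI ?F) ?AI) ?F q p = mmul2 n d (mmul2 n d ?AI ?F) ?AI q (sw i p)"
      by (rule mF[OF p i])
    also have "\<dots> = (\<Sum>t\<in>S \<times> S. mmul2 n d ?AI ?F q t * ?AI t (sw i p))"
      by (simp add: mmul2_def)
    also have "\<dots> = (\<Sum>t\<in>S \<times> S. ?AI q (sw i t) * ?AI t (sw i p))"
      by (rule sum.cong[OF refl]) (simp add: mF[OF _ i])
    finally show ?thesis .
  qed
  have "expect2 n d (tensor R R) (mmul2 n d (mmul2 n d (mmul2 n d ?AI ?F) ?AI) ?F)
     = (\<Sum>p\<in>S \<times> S. \<Sum>q\<in>S \<times> S. tensor R R p q * (\<Sum>t\<in>S \<times> S. ?AI q (sw i t) * ?AI t (sw i p)))"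
    unfolding expect2_def tr2_def mmul2_def[of _ _ "tensor R R"]
    by (rule sum.cong[OF refl], rule sum.cong[OF refl]) (simp add: G)
  also have "\<dots> = ?R"
    by (simp add: sum_SxS tensor_def ext_id_def sw_def sum_distrib_left mult_ac)
  finally show ?thesis .
qed

end

context PS begin

lemma stepC:
  assumes i: "i < n" and y: "y \<in> S" and y': "y' \<in> S" and x: "x \<in> S" and z: "z \<in> S"
  shows "(\<Sum>x'\<in>S. \<Sum>z'\<in>S.
        R y x * R y' x' * ((A x (z(i := z' i)) * (if x' = z'(i := z i) then 1 else 0)) *
          (A z (y(i := y' i)) * (if z' = y'(i := y i) then 1 else 0))))
    = R y x * R y' (y'(i := z i)) * (A x (z(i := y i)) * A z (y(i := y' i)))"
  (is "(\<Sum>x'\<in>S. \<Sum>z'\<in>S. ?T x' z') = ?V")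
proof -
  have a: "y'(i := y i) \<in> S" using upd_S[OF y' i S_lt[OF y i]] .
  have b: "y'(i := z i) \<in> S" using upd_S[OF y' i S_lt[OF z i]] .
  have T: "?T x' z' = (if z' = y'(i := y i) then (if x' = y'(i := z i) then ?V else 0) else 0)" for x' z'
    by auto
  show ?thesis unfolding T using a b by (simp add: sum.delta' cong: if_cong)
qed

lemma swap_reduce:
  assumes i: "i < n"
  shows "expect2 n d (tensor R R) (mmul2 n d (mmul2 n d (mmul2 n d (ext_id A) (swap_op i)) (ext_id A)) (swap_op i))
    = (\<Sum>y\<in>S. \<Sum>x\<in>S. \<Sum>z\<in>S. R y x * A x (z(i := y i)) * (\<Sum>c<d i. \<rho> i c (z i) * A z (y(i := c))))"
proof -
  let ?V = "\<lambda>y y' x z. R y x * R y' (y'(i := z i)) * (A x (z(i := y i)) * A z (y(i := y' i)))"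
  have "expect2 n d (tensor R R) (mmul2 n d (mmul2 n d (mmul2 n d (ext_id A) (swap_op i)) (ext_id A)) (swap_op i))
     = (\<Sum>y\<in>S. \<Sum>y'\<in>S. \<Sum>x\<in>S. \<Sum>z\<in>S. ?V y y' x z)"
    unfolding swap_expand[OF i]
  proof (rule sum.cong[OF refl], rule sum.cong[OF refl], rule sum.cong[OF refl])
    fix y y' x assume y: "y \<in> S" and y': "y' \<in> S" and x: "x \<in> S"
    show "(\<Sum>x'\<in>S. \<Sum>z\<in>S. \<Sum>z'\<in>S.
        R y x * R y' x' * ((A x (z(i := z' i)) * (if x' = z'(i := z i) then 1 else 0)) *
          (A z (y(i := y' i)) * (if z' = y'(i := y i) then 1 else 0)))) = (\<Sum>z\<in>S. ?V y y' x z)"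
      by (subst sum.swap) (rule sum.cong[OF refl], rule stepC[OF i y y' x], simp)
  qed
  also have "\<dots> = (\<Sum>y\<in>S. \<Sum>x\<in>S. \<Sum>y'\<in>S. \<Sum>z\<in>S. ?V y y' x z)"
    by (rule sum.cong[OF refl], rule sum.swap)
  also have "\<dots> = (\<Sum>y\<in>S. \<Sum>x\<in>S. \<Sum>z\<in>S. \<Sum>y'\<in>S. ?V y y' x z)"
    by (rule sum.cong[OF refl], rule sum.cong[OF refl], rule sum.swap)
  also have "\<dots> = (\<Sum>y\<in>S. \<Sum>x\<in>S. \<Sum>z\<in>S. R y x * A x (z(i := y i)) * (\<Sum>c<d i. \<rho> i c (z i) * A z (y(i := c))))"
  proof (rule sum.cong[OF refl], rule sum.cong[OF refl], rule sum.cong[OF refl])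
    fix y x z assume z: "z \<in> S"
    have "(\<Sum>y'\<in>S. ?V y y' x z) = R y x * A x (z(i := y i)) * (\<Sum>y'\<in>S. R y' (y'(i := z i)) * A z (y(i := y' i)))"
      by (simp add: sum_distrib_left mult_ac)
    also have "(\<Sum>y'\<in>S. R y' (y'(i := z i)) * A z (y(i := y' i))) = (\<Sum>c<d i. \<rho> i c (z i) * A z (y(i := c)))"
      by (rule L3[OF i S_lt[OF z i], of "\<lambda>c. A z (y(i := c))"])
    finally show "(\<Sum>y'\<in>S. ?V y y' x z) = R y x * A x (z(i := y i)) * (\<Sum>c<d i. \<rho> i c (z i) * A z (y(i := c)))" .
  qed
  finally show ?thesis .
qed

lemma swap_ex:
  assumes i: "i < n"
  shows "expect2 n d (tensor R R) (mmul2 n d (mmul2 n d (mmul2 n d (ext_id A) (swap_op i)) (ext_id A)) (swap_op i))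
    = ex (mmul n d (E i A) (E i A))"
proof -
  have "(\<Sum>y\<in>S. \<Sum>x\<in>S. \<Sum>z\<in>S. R y x * A x (z(i := y i)) * (\<Sum>c<d i. \<rho> i c (z i) * A z (y(i := c))))
    = (\<Sum>y\<in>S0 i. \<Sum>x\<in>S0 i. \<Sum>z\<in>S0 i. \<Sum>p<d i. \<Sum>q<d i. \<Sum>r<d i.
        R (y(i:=p)) (x(i:=q)) * A (x(i:=q)) ((z(i:=r))(i := p)) * (\<Sum>c<d i. \<rho> i c r * A (z(i:=r)) ((y(i:=p))(i := c))))"
    by (subst split3[OF i]) (simp only: fun_upd_same fun_upd_upd)
  also have "\<dots> = (\<Sum>y\<in>S0 i. \<Sum>x\<in>S0 i. \<Sum>z\<in>S0 i. \<Sum>p<d i. \<Sum>q<d i. \<Sum>r<d i.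
        R (y(i:=p)) (x(i:=q)) * (E i A (x(i:=q)) (z(i:=r)) * E i A (z(i:=r)) (y(i:=p))))"
  proof (rule sum.cong[OF refl], rule sum.cong[OF refl], rule sum.cong[OF refl])
    fix y x z
    have "(\<Sum>p<d i. \<Sum>q<d i. \<Sum>r<d i.
        R (y(i:=p)) (x(i:=q)) * A (x(i:=q)) ((z(i:=r))(i := p)) * (\<Sum>c<d i. \<rho> i c r * A (z(i:=r)) ((y(i:=p))(i := c))))
      = Rm i y x * (\<Sum>p<d i. \<Sum>q<d i. \<rho> i p q * A (x(i:=q)) (z(i:=p))) * (\<Sum>r<d i. \<Sum>c<d i. \<rho> i c r * A (z(i:=r)) (y(i:=c)))"
      by (simp add: R_upd[OF i] sum_distrib_left sum_distrib_right mult_ac)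
    also have "(\<Sum>r<d i. \<Sum>c<d i. \<rho> i c r * A (z(i:=r)) (y(i:=c))) = al i A z y"
      unfolding al_def by (rule sum.swap)
    also have "(\<Sum>p<d i. \<Sum>q<d i. \<rho> i p q * A (x(i:=q)) (z(i:=p))) = al i A x z"
      unfolding al_def by simp
    also have "Rm i y x * al i A x z * al i A z y = (\<Sum>p<d i. \<rho> i p p * (Rm i y x * al i A x z * al i A z y))"
      by (simp add: sum_distrib_right[symmetric] trace1[OF i])
    also have "\<dots> = (\<Sum>p<d i. \<Sum>q<d i. \<Sum>r<d i.
        R (y(i:=p)) (x(i:=q)) * (E i A (x(i:=q)) (z(i:=r)) * E i A (z(i:=r)) (y(i:=p))))"
      by (simp add: R_upd[OF i] Ei_upd mult_if0 if0_mult mult_ac cong: if_cong)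
    finally show "(\<Sum>p<d i. \<Sum>q<d i. \<Sum>r<d i.
        R (y(i:=p)) (x(i:=q)) * A (x(i:=q)) ((z(i:=r))(i := p)) * (\<Sum>c<d i. \<rho> i c r * A (z(i:=r)) ((y(i:=p))(i := c))))
      = (\<Sum>p<d i. \<Sum>q<d i. \<Sum>r<d i.
        R (y(i:=p)) (x(i:=q)) * (E i A (x(i:=q)) (z(i:=r)) * E i A (z(i:=r)) (y(i:=p))))" .
  qed
  also have "\<dots> = ex (mmul n d (E i A) (E i A))"
    unfolding ex_mmul by (rule split3[OF i, symmetric])
  finally show ?thesis using swap_reduce[OF i] by simp
qed

end

lemma sum_pairs:
  fixes g :: "nat \<Rightarrow> nat \<Rightarrow> 'a::comm_monoid_add"
  assumes k: "k < n" and z: "\<And>i j. i < n \<Longrightarrow> j < n \<Longrightarrow> i \<noteq> j \<Longrightarrow> k \<noteq> i \<Longrightarrow> k \<noteq> j \<Longrightarrow> g i j = 0"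
  shows "(\<Sum>i<n. \<Sum>j\<in>{..<n}-{i}. g i j) = (\<Sum>j\<in>{..<n}-{k}. g k j) + (\<Sum>i\<in>{..<n}-{k}. g i k)"
proof -
  have "(\<Sum>i<n. \<Sum>j\<in>{..<n}-{i}. g i j) = (\<Sum>j\<in>{..<n}-{k}. g k j) + (\<Sum>i\<in>{..<n}-{k}. \<Sum>j\<in>{..<n}-{i}. g i j)"
    using k by (simp add: sum.remove[of "{..<n}" k])
  also have "(\<Sum>i\<in>{..<n}-{k}. \<Sum>j\<in>{..<n}-{i}. g i j) = (\<Sum>i\<in>{..<n}-{k}. g i k)"
  proof (rule sum.cong[OF refl])
    fix i assume i: "i \<in> {..<n}-{k}"
    have "(\<Sum>j\<in>{..<n}-{i}. g i j) = g i k + (\<Sum>j\<in>{..<n}-{i}-{k}. g i j)"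
      using i k by (subst sum.remove[of _ k]) auto
    also have "(\<Sum>j\<in>{..<n}-{i}-{k}. g i j) = 0"
      by (rule sum.neutral) (use i z in auto)
    finally show "(\<Sum>j\<in>{..<n}-{i}. g i j) = g i k" by simp
  qed
  finally show ?thesis .
qed

context PS begin

lemma local_E:
  assumes i: "i < n" and j: "j < n" and ij: "i \<noteq> j" and k: "k < n" and ki: "k \<noteq> i" and kj: "k \<noteq> j"
    and loc: "local_on n d i j A" and x: "x \<in> S" and y: "y \<in> S"
  shows "E k A x y = A x y"
proof -
  obtain Y where Y: "\<forall>x\<in>S. \<forall>y\<in>S. A x y = (if (\<forall>l\<in>{..<n} - {i, j}. x l = y l) then Y (x i) (x j) (y i) (y j) else 0)"
    using loc unfolding local_on_def by blast
  have kin: "k \<in> {..<n} - {i, j}" using k ki kj by simp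
  show ?thesis
  proof (cases "x k = y k")
    case False
    have "A x y = 0" using Y x y kin False by auto
    then show ?thesis using False by (simp add: E_eq)
  next
    case True
    have upd: "A (x(k:=b)) (y(k:=a)) = (if b = a then A x y else 0)" if a: "a < d k" and b: "b < d k" for a b
    proof -
      have xb: "x(k:=b) \<in> S" using upd_S[OF x k b] .
      have ya: "y(k:=a) \<in> S" using upd_S[OF y k a] .
      have iff: "(\<forall>l\<in>{..<n} - {i, j}. (x(k:=b)) l = (y(k:=a)) l) \<longleftrightarrow> (b = a \<and> (\<forall>l\<in>{..<n} - {i, j}. x l = y l))"
      proof
        assume h: "\<forall>l\<in>{..<n} - {i, j}. (x(k:=b)) l = (y(k:=a)) l"
        have "b = a" using h kin by (metis fun_upd_same)
        moreover have "\<forall>l\<in>{..<n} - {i, j}. x l = y l"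
        proof
          fix l assume l: "l \<in> {..<n} - {i, j}"
          show "x l = y l"
          proof (cases "l = k")
            case True then show ?thesis using \<open>x k = y k\<close> by simp
          next
            case False then show ?thesis using h l by (metis fun_upd_other)
          qed
        qed
        ultimately show "b = a \<and> (\<forall>l\<in>{..<n} - {i, j}. x l = y l)" ..
      next
        assume "b = a \<and> (\<forall>l\<in>{..<n} - {i, j}. x l = y l)"
        then show "\<forall>l\<in>{..<n} - {i, j}. (x(k:=b)) l = (y(k:=a)) l" by auto
      qed
      have "A (x(k:=b)) (y(k:=a)) = (if (\<forall>l\<in>{..<n} - {i, j}. (x(k:=b)) l = (y(k:=a)) l)
           then Y ((x(k:=b)) i) ((x(k:=b)) j) ((y(k:=a)) i) ((y(k:=a)) j) else 0)"
        using Y xb ya by blast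
      also have "\<dots> = (if b = a \<and> (\<forall>l\<in>{..<n} - {i, j}. x l = y l) then Y (x i) (x j) (y i) (y j) else 0)"
        unfolding iff using ki kj by simp
      also have "\<dots> = (if b = a then A x y else 0)"
        using Y x y by simp
      finally show ?thesis .
    qed
    have "E k A x y = (\<Sum>a<d k. \<Sum>b<d k. \<rho> k a b * A (x(k:=b)) (y(k:=a)))"
      using True by (simp add: E_eq al_def)
    also have "\<dots> = (\<Sum>a<d k. \<Sum>b<d k. \<rho> k a b * (if b = a then A x y else 0))"
      by (intro sum.cong refl) (simp add: upd)
    also have "\<dots> = (\<Sum>a<d k. \<rho> k a a) * A x y"
      by (simp add: mult_if0 sum_distrib_right cong: if_cong)
    also have "\<dots> = A x y" by (simp add: trace1[OF k])
    finally show ?thesis .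
  qed
qed

lemma herm_sum: assumes h: "\<forall>k\<in>K. hermitian n d (f k)" shows "hermitian n d (\<lambda>x y. \<Sum>k\<in>K. f k x y)"
  unfolding hermitian_def
proof (intro ballI)
  fix x y assume x: "x \<in> S" and y: "y \<in> S"
  have "(\<Sum>k\<in>K. f k x y) = (\<Sum>k\<in>K. cnj (f k y x))"
  proof (rule sum.cong[OF refl])
    fix k assume "k \<in> K"
    then show "f k x y = cnj (f k y x)" using h x y unfolding hermitian_def by blast
  qed
  then show "(\<Sum>k\<in>K. f k x y) = cnj (\<Sum>k\<in>K. f k y x)" by (simp add: cnj_sum)
qed

lemma mmul_scale2: "mmul n d (\<lambda>x y. c * A x y) (\<lambda>x y. c * B x y) = (\<lambda>x y. (c * c) * mmul n d A B x y)"
  by (auto simp: mmul_def sum_distrib_left mult_ac intro!: ext)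

end

context PS begin

lemma main:
  fixes Xp :: "nat \<Rightarrow> nat \<Rightarrow> op"
  assumes symm: "\<forall>i<n. \<forall>j<n. i \<noteq> j \<longrightarrow> (\<forall>x\<in>S. \<forall>y\<in>S. Xp i j x y = Xp j i x y)"
    and obs: "\<forall>i<n. \<forall>j<n. i \<noteq> j \<longrightarrow> hermitian n d (Xp i j) \<and> local_on n d i j (Xp i j)"
  defines "XI \<equiv> \<lambda>i x y. \<Sum>j\<in>{..<n} - {i}. Xp i j x y"
    and "X \<equiv> \<lambda>x y. \<Sum>i<n. \<Sum>j\<in>{..<n} - {i}. Xp i j x y"
  shows "var n d R X \<le> 4 * (\<Sum>i<n. ex (mmul n d (cond_dev d \<rho> i (XI i)) (cond_dev d \<rho> i (XI i))))
       \<and> 4 * (\<Sum>i<n. ex (mmul n d (cond_dev d \<rho> i (XI i)) (cond_dev d \<rho> i (XI i))))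
         = 4 * (\<Sum>i<n. ex (mmul n d (XI i) (XI i)))
           - 4 * (\<Sum>i<n. expect2 n d (tensor R R)
                 (mmul2 n d (mmul2 n d (mmul2 n d (ext_id (XI i)) (swap_op i)) (ext_id (XI i)))
                    (swap_op i)))"
proof
  have hX: "hermitian n d X"
    unfolding X_def
    by (rule herm_sum, rule ballI, rule herm_sum) (use obs in auto)
  have Dk: "ex (mmul n d (cond_dev d \<rho> k X) (cond_dev d \<rho> k X)) =
      4 * ex (mmul n d (cond_dev d \<rho> k (XI k)) (cond_dev d \<rho> k (XI k)))" if k: "k < n" for k
  proof -
    define g where "g = (\<lambda>i j x y. Xp i j x y - E k (Xp i j) x y)"
    have DX: "cond_dev d \<rho> k X = (\<lambda>x y. \<Sum>i<n. \<Sum>j\<in>{..<n} - {i}. g i j x y)"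
      unfolding cond_dev_def X_def g_def by (simp add: E_sum sum_subtractf)
    have DXI: "cond_dev d \<rho> k (XI k) = (\<lambda>x y. \<Sum>j\<in>{..<n} - {k}. g k j x y)"
      unfolding cond_dev_def XI_def g_def by (simp add: E_sum sum_subtractf)
    have eqS: "\<forall>x\<in>S. \<forall>y\<in>S. cond_dev d \<rho> k X x y = 2 * cond_dev d \<rho> k (XI k) x y"
    proof (intro ballI)
      fix x y assume x: "x \<in> S" and y: "y \<in> S"
      have "(\<Sum>i<n. \<Sum>j\<in>{..<n} - {i}. g i j x y) = (\<Sum>j\<in>{..<n}-{k}. g k j x y) + (\<Sum>i\<in>{..<n}-{k}. g i k x y)"
      proof (rule sum_pairs[OF k])
        fix i j assume "i < n" "j < n" "i \<noteq> j" "k \<noteq> i" "k \<noteq> j"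
        then show "g i j x y = 0" unfolding g_def using local_E[of i j k "Xp i j" x y] obs x y k by auto
      qed
      also have "(\<Sum>i\<in>{..<n}-{k}. g i k x y) = (\<Sum>i\<in>{..<n}-{k}. g k i x y)"
      proof (rule sum.cong[OF refl])
        fix i assume i: "i \<in> {..<n}-{k}"
        have s: "\<forall>x\<in>S. \<forall>y\<in>S. Xp i k x y = Xp k i x y" using symm i k by auto
        show "g i k x y = g k i x y" unfolding g_def
          using s x y E_cong[OF k s x y] by simp
      qed
      finally show "cond_dev d \<rho> k X x y = 2 * cond_dev d \<rho> k (XI k) x y"
        unfolding DX DXI by simp
    qed
    have "ex (mmul n d (cond_dev d \<rho> k X) (cond_dev d \<rho> k X)) =
        ex (mmul n d (\<lambda>x y. 2 * cond_dev d \<rho> k (XI k) x y) (\<lambda>x y. 2 * cond_dev d \<rho> k (XI k) x y))"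
      by (rule ex_mmul_cong) (use eqS in auto)
    also have "\<dots> = 4 * ex (mmul n d (cond_dev d \<rho> k (XI k)) (cond_dev d \<rho> k (XI k)))"
      unfolding mmul_scale2 ex_scale by simp
    finally show ?thesis .
  qed
  have "var n d R X \<le> (\<Sum>k<n. ex (mmul n d (cond_dev d \<rho> k X) (cond_dev d \<rho> k X)))"
    by (rule efron_stein[OF hX])
  also have "\<dots> = 4 * (\<Sum>i<n. ex (mmul n d (cond_dev d \<rho> i (XI i)) (cond_dev d \<rho> i (XI i))))"
    by (simp add: Dk sum_distrib_left)
  finally show "var n d R X \<le> 4 * (\<Sum>i<n. ex (mmul n d (cond_dev d \<rho> i (XI i)) (cond_dev d \<rho> i (XI i))))" .
next
  have sumeq: "(\<Sum>i<n. ex (mmul n d (cond_dev d \<rho> i (XI i)) (cond_dev d \<rho> i (XI i)))) =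
     (\<Sum>i<n. ex (mmul n d (XI i) (XI i)) - expect2 n d (tensor R R)
                 (mmul2 n d (mmul2 n d (mmul2 n d (ext_id (XI i)) (swap_op i)) (ext_id (XI i)))
                    (swap_op i)))"
    by (rule sum.cong[OF refl]) (simp add: ex_dev swap_ex)
  show "4 * (\<Sum>i<n. ex (mmul n d (cond_dev d \<rho> i (XI i)) (cond_dev d \<rho> i (XI i))))
         = 4 * (\<Sum>i<n. ex (mmul n d (XI i) (XI i)))
           - 4 * (\<Sum>i<n. expect2 n d (tensor R R)
                 (mmul2 n d (mmul2 n d (mmul2 n d (ext_id (XI i)) (swap_op i)) (ext_id (XI i)))
                    (swap_op i)))"
    unfolding sumeq sum_subtractf right_diff_distrib by (rule refl)
qed

end

theorem corollary6p7:
  fixes n :: nat and d :: "nat \<Rightarrow> nat"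
    and \<rho> :: "nat \<Rightarrow> nat \<Rightarrow> nat \<Rightarrow> complex"
    and Xp :: "nat \<Rightarrow> nat \<Rightarrow> op"
  assumes dims: "\<forall>i<n. d i \<ge> 1"
    and states: "\<forall>i<n. density_matrix (d i) (\<rho> i)"
    and symm: "\<forall>i<n. \<forall>j<n. i \<noteq> j \<longrightarrow>
                 (\<forall>x\<in>basis n d. \<forall>y\<in>basis n d. Xp i j x y = Xp j i x y)"
    and obs: "\<forall>i<n. \<forall>j<n. i \<noteq> j \<longrightarrow> hermitian n d (Xp i j) \<and> local_on n d i j (Xp i j)"
  defines "rhoK \<equiv> product_state n \<rho>"
    and "Xi \<equiv> \<lambda>i x y. \<Sum>j\<in>{..<n} - {i}. Xp i j x y"
    and "X \<equiv> \<lambda>x y. \<Sum>i<n. \<Sum>j\<in>{..<n} - {i}. Xp i j x y"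
  shows "var n d rhoK X \<le>
           4 * (\<Sum>i<n. expect n d rhoK
                 (mmul n d (cond_dev d \<rho> i (Xi i)) (cond_dev d \<rho> i (Xi i))))
       \<and> 4 * (\<Sum>i<n. expect n d rhoK
                 (mmul n d (cond_dev d \<rho> i (Xi i)) (cond_dev d \<rho> i (Xi i))))
         = 4 * (\<Sum>i<n. expect n d rhoK (mmul n d (Xi i) (Xi i)))
           - 4 * (\<Sum>i<n. expect2 n d (tensor rhoK rhoK)
                 (mmul2 n d (mmul2 n d (mmul2 n d (ext_id (Xi i)) (swap_op i)) (ext_id (Xi i)))
                    (swap_op i)))"
proof -
  interpret PS n d \<rho> by (rule PS.intro) (use dims states in auto)
  show ?thesis
    unfolding rhoK_def Xi_def X_def by (rule main[OF symm obs])
qed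

end
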